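(* There is an absolute constant $c$ such that for every $h\in A_2(\mathbb R_+,\ell^1)$, $$[h]_{int}\le c\,[h]_{2,\ell^1}\,e^{c[h]_{2,\ell^1}}.$$
   Context: For a nonnegative $f$ and a set $E$ of positive measure, $\langle f\rangle_E=\frac1{|E|}\int_Ef\,dx$; $I_{x,y}=[x,x+y)$. For measurable $h\ge0$ on $\mathbb R_+$, $[h]_{2,\ell^1}=\sum_{n=0}^\infty\big(\langle h\rangle_{I_{n,2}}\langle h^{-1}\rangle_{I_{n,2}}-1\big)$, and $A_2(\mathbb R_+,\ell^1)$ is the class of $h\ge0$ with $[h]_{2,\ell^1}<\infty$. Further, $[h]_{int}=\int_0^\infty(\kappa(s)+\kappa_d(s)-2)\,ds\in[0,\infty]$, where $\kappa(r)=\frac1{h(r)}\int_r^\infty h(s)e^{r-s}ds$ and $\kappa_d(r)=h(r)\int_r^\infty\frac1{h(s)}e^{r-s}ds$. *)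

theory Defs
  imports "HOL-Analysis.Analysis"
begin

definition avg :: "real set \<Rightarrow> (real \<Rightarrow> ennreal) \<Rightarrow> ennreal" where
  "avg E f = (\<integral>\<^sup>+ x\<in>E. f x \<partial>lborel) / emeasure lborel E"

definition Ivl :: "real \<Rightarrow> real \<Rightarrow> real set" where
  "Ivl x y = {x..<x+y}"

text \<open>[h]_{2,l^1} (values in [0,\<infinity>]); h^{-1} is taken in ennreal, so 1/0 = \<infinity>.\<close>
definition A2l1 :: "(real \<Rightarrow> real) \<Rightarrow> ennreal" where
  "A2l1 h = (\<Sum>n. avg (Ivl (real n) 2) (\<lambda>x. ennreal (h x))
                  * avg (Ivl (real n) 2) (\<lambda>x. inverse (ennreal (h x))) - 1)"

definition kappa :: "(real \<Rightarrow> real) \<Rightarrow> real \<Rightarrow> ennreal" where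
  "kappa h r = (\<integral>\<^sup>+ s\<in>{r..}. ennreal (h s * exp (r - s)) \<partial>lborel) / ennreal (h r)"

definition kappa_d :: "(real \<Rightarrow> real) \<Rightarrow> real \<Rightarrow> ennreal" where
  "kappa_d h r = ennreal (h r) *
     (\<integral>\<^sup>+ s\<in>{r..}. inverse (ennreal (h s)) * ennreal (exp (r - s)) \<partial>lborel)"

definition h_int :: "(real \<Rightarrow> real) \<Rightarrow> ennreal" where
  "h_int h = (\<integral>\<^sup>+ s\<in>{0<..}. (kappa h s + kappa_d h s - 2) \<partial>lborel)"

end

theory Submission
  imports Defs "HOL-Analysis.Analysis"
begin

lemma ennreal_suminf_swap: "(\<Sum>n. \<Sum>d. (f n d::ennreal)) = (\<Sum>d. \<Sum>n. f n d)"
proof -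
  have "(\<Sum>n. \<Sum>d. f n d) = (\<integral>\<^sup>+n. (\<Sum>d. f n d) \<partial>count_space UNIV)"
    by (simp add: nn_integral_count_space_nat)
  also have "\<dots> = (\<Sum>d. \<integral>\<^sup>+ n. f n d \<partial>count_space UNIV)"
    by (rule nn_integral_suminf) simp
  also have "\<dots> = (\<Sum>d. \<Sum>n. f n d)" by (simp add: nn_integral_count_space_nat)
  finally show ?thesis .
qed

lemma ennreal_le_suminf: "(f::nat \<Rightarrow> ennreal) i \<le> suminf f"
  using sum_le_suminf[of f "{i}"] by (auto simp: summableI)

lemma ennreal_suminf_shift_le: "(\<Sum>n. (f::nat \<Rightarrow> ennreal) (n + j)) \<le> suminf f"
  using suminf_offset[of f j] by (simp add: summableI)

lemma two_le_sum: assumes "0 < x" "0 < y" "1 \<le> x * y" shows "2 \<le> x + (y::real)"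
proof -
  have "4 \<le> (x + y)^2" using zero_le_power2[of "x - y"] \<open>1 \<le> x * y\<close>
    by (simp add: power2_eq_square algebra_simps)
  hence "2^2 \<le> (x + y)^2" by simp
  thus ?thesis by (rule power2_le_imp_le) (use \<open>0 < x\<close> \<open>0 < y\<close> in auto)
qed

lemma one_le_mult: "1 \<le> x \<Longrightarrow> 1 \<le> y \<Longrightarrow> 1 \<le> x * (y::real)"
  using mult_mono[of 1 x 1 y] by auto

locale disc =
  fixes A B :: "nat \<Rightarrow> real"
  assumes Apos: "\<And>k. 0 < A k" and Bpos: "\<And>k. 0 < B k" and AB: "\<And>k. 1 \<le> A k * B k"
begin

definition eps :: "nat \<Rightarrow> real" where
  "eps k = (A k + A (Suc k)) * (B k + B (Suc k)) / 4 - 1"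
definition F :: "nat \<Rightarrow> nat \<Rightarrow> real" where
  "F n m = A m * B n + A n * B m - 2"

lemma F_nonneg: "0 \<le> F n m"
proof -
  have "1 \<le> (A m * B m) * (A n * B n)" using AB[of m] AB[of n]
    by (rule one_le_mult) 
  hence "1 \<le> (A m * B n) * (A n * B m)" by (simp add: algebra_simps)
  hence "2 \<le> A m * B n + A n * B m"
    by (intro two_le_sum) (auto intro!: mult_pos_pos Apos Bpos)
  thus ?thesis by (simp add: F_def)
qed

lemma eps_expand: "4 * eps n = A n * B n + A (Suc n) * B (Suc n) + F n (Suc n) - 2"
  by (simp add: eps_def F_def algebra_simps)

lemma eps_nonneg: "0 \<le> eps n"
  using eps_expand[of n] AB[of n] AB[of "Suc n"] F_nonneg[of n "Suc n"] by linarith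

lemma F_diag: "F n n \<le> 8 * eps n"
  using eps_expand[of n] AB[of "Suc n"] F_nonneg[of n "Suc n"] by (simp add: F_def)

lemma F_adj: "F n (Suc n) \<le> 4 * eps n"
  using eps_expand[of n] AB[of n] AB[of "Suc n"] by linarith

lemma F_rec: "F n (Suc m) \<le> (2 + F m (Suc m)) * F n m + 2 * F m (Suc m)"
proof -
  define X where "X = A (Suc m) * B m"
  define Y where "Y = A m * B n"
  define X' where "X' = A m * B (Suc m)"
  define Y' where "Y' = A n * B m"
  have h1: "A (Suc m) * B n \<le> X * Y"
  proof -
    have "A (Suc m) * B n * 1 \<le> A (Suc m) * B n * (A m * B m)"
      using AB[of m] Apos Bpos by (intro mult_left_mono) (auto intro: less_imp_le)
    thus ?thesis by (simp add: X_def Y_def algebra_simps)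
  qed
  have h2: "A n * B (Suc m) \<le> X' * Y'"
  proof -
    have "A n * B (Suc m) * 1 \<le> A n * B (Suc m) * (A m * B m)"
      using AB[of m] Apos Bpos by (intro mult_left_mono) (auto intro: less_imp_le)
    thus ?thesis by (simp add: X'_def Y'_def algebra_simps)
  qed
  have p1: "1 \<le> (A (Suc m) * B (Suc m)) * (A n * B n)"
    using AB[of "Suc m"] AB[of n] by (rule one_le_mult)
  have p2: "1 \<le> (A m * B m) * (A m * B m)"
    using AB[of m] AB[of m] by (rule one_le_mult)
  have "1 \<le> ((A (Suc m) * B (Suc m)) * (A n * B n)) * ((A m * B m) * (A m * B m))"
    using p1 p2 by (rule one_le_mult)
  hence "1 \<le> (X * Y') * (X' * Y)" by (simp add: X_def Y_def X'_def Y'_def algebra_simps)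
  hence h3: "2 \<le> X * Y' + X' * Y"
    by (intro two_le_sum) (auto simp: X_def Y_def X'_def Y'_def intro!: mult_pos_pos Apos Bpos)
  have e1: "X + X' = F m (Suc m) + 2" by (simp add: F_def X_def X'_def)
  have e2: "Y + Y' = F n m + 2" by (simp add: F_def Y_def Y'_def)
  have "F n (Suc m) + 2 \<le> X * Y + X' * Y'" using h1 h2 by (simp add: F_def)
  also have "\<dots> = (X + X') * (Y + Y') - (X * Y' + X' * Y)" by (simp add: algebra_simps)
  also have "\<dots> \<le> (F m (Suc m) + 2) * (F n m + 2) - 2" using h3 e1 e2 by simp
  finally show ?thesis by (simp add: algebra_simps)
qed

definition T :: "nat \<Rightarrow> nat \<Rightarrow> real" where
  "T n e = (\<Sum>j<Suc e. F (n + j) (Suc (n + j)))"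

lemma T_nonneg: "0 \<le> T n e" unfolding T_def by (intro sum_nonneg) (simp add: F_nonneg)

lemma F_chain: "F n (n + Suc e) \<le> 2 ^ e * T n e * exp (T n e)"
proof (induction e)
  case 0
  have "F n (Suc n) * 1 \<le> F n (Suc n) * exp (F n (Suc n))"
    using F_nonneg by (intro mult_left_mono) auto
  thus ?case by (simp add: T_def)
next
  case (Suc e)
  define D where "D = F (n + Suc e) (Suc (n + Suc e))"
  have TS: "T n (Suc e) = T n e + D" by (simp add: T_def D_def)
  have D0: "0 \<le> D" by (simp add: D_def F_nonneg)
  have rec: "F n (n + Suc (Suc e)) \<le> (2 + D) * F n (n + Suc e) + 2 * D"
    using F_rec[of n "n + Suc e"] by (simp add: D_def)
  have "2 + D \<le> 2 * exp D" using exp_ge_add_one_self[of D] D0 by linarith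
  have "(2 + D) * F n (n + Suc e) \<le> (2 * exp D) * (2 ^ e * T n e * exp (T n e))"
    using Suc.IH \<open>2 + D \<le> 2 * exp D\<close> D0 F_nonneg
    by (intro mult_mono) (auto intro!: mult_nonneg_nonneg T_nonneg)
  also have "\<dots> = 2 ^ Suc e * T n e * exp (T n (Suc e))"
    by (simp add: TS exp_add algebra_simps)
  finally have a1: "(2 + D) * F n (n + Suc e) \<le> 2 ^ Suc e * T n e * exp (T n (Suc e))" .
  have "2 * D * 1 \<le> 2 ^ Suc e * D * exp (T n (Suc e))"
  proof (rule mult_mono)
    show "2 * D \<le> 2 ^ Suc e * D" using D0 by (intro mult_right_mono) auto
  qed (use D0 T_nonneg in auto)
  hence a2: "2 * D \<le> 2 ^ Suc e * D * exp (T n (Suc e))" by simp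
  have "F n (n + Suc (Suc e)) \<le> 2 ^ Suc e * T n e * exp (T n (Suc e)) + 2 ^ Suc e * D * exp (T n (Suc e))"
    using rec a1 a2 by linarith
  also have "\<dots> = 2 ^ Suc e * T n (Suc e) * exp (T n (Suc e))" by (simp add: TS algebra_simps)
  finally show ?case .
qed

lemma T_le: "T n e \<le> 4 * (\<Sum>j<Suc e. eps (n + j))"
  unfolding T_def sum_distrib_left by (intro sum_mono) (simp add: F_adj)

end


locale disc_fin = disc +
  assumes fin: "(\<Sum>n. ennreal (eps n)) \<noteq> \<infinity>"
begin

lemma eps_summable: "summable eps"
  by (rule summable_suminf_not_top) (use eps_nonneg fin in auto)

definition "E = suminf eps"

lemma E_nonneg: "0 \<le> E"
  unfolding E_def using eps_summable eps_nonneg by (simp add: suminf_nonneg)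

lemma E_eq: "(\<Sum>n. ennreal (eps n)) = ennreal E"
  unfolding E_def by (rule suminf_ennreal2[OF eps_nonneg eps_summable])

lemma S_le_E: "(\<Sum>j<k. eps (n + j)) \<le> E"
proof -
  have "(\<Sum>j<k. eps (n + j)) = sum eps {n..<k+n}"
    using sum.shift_bounds_nat_ivl[of eps 0 n k] by (simp add: atLeast0LessThan add.commute)
  also have "\<dots> \<le> E" unfolding E_def
    by (rule sum_le_suminf[OF eps_summable]) (auto simp: eps_nonneg)
  finally show ?thesis .
qed

definition q :: real where "q = 2 * exp (-1)"
definition w :: "nat \<Rightarrow> real" where "w d = (case d of 0 \<Rightarrow> 1 | Suc e \<Rightarrow> exp (- real e))"

lemma e_ge: "5/2 \<le> exp (1::real)"
  using exp_lower_Taylor_quadratic[of 1] by simp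

lemma q_bounds: "1/2 \<le> q" "q \<le> 4/5"
proof -
  have qe: "q = 2 / exp 1" by (simp add: q_def exp_minus field_simps)
  have "exp (1::real) \<le> 4" using exp_le by simp
  thus "1/2 \<le> q" unfolding qe by (simp add: field_simps)
  show "q \<le> 4/5" using e_ge unfolding qe by (simp add: field_simps)
qed

lemma w_pow: "exp (- real e) * 2 ^ e = q ^ e"
proof -
  have "exp (- real e) = exp (-1) ^ e" using exp_of_nat_mult[of e "-1"] by simp
  thus ?thesis by (simp add: q_def power_mult_distrib)
qed

definition K :: real where "K = 8 * exp (4 * E)"

lemma cell_bound: "w d * F n (n + d) \<le> K * q ^ d * (\<Sum>j<Suc d. eps (n + j))"
proof (cases d)
  case 0
  have "1 \<le> exp (4 * E)" using E_nonneg by simp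
  hence "1 * (8 * eps n) \<le> exp (4 * E) * (8 * eps n)"
    by (rule mult_right_mono) (simp add: eps_nonneg)
  hence "F n n \<le> K * eps n" using F_diag[of n] by (simp add: K_def mult_ac)
  thus ?thesis using 0 by (simp add: w_def)
next
  case (Suc e)
  define S where "S = (\<Sum>j<Suc e. eps (n + j))"
  have S0: "0 \<le> S" unfolding S_def by (intro sum_nonneg) (simp add: eps_nonneg)
  have TS: "T n e \<le> 4 * S" unfolding S_def by (rule T_le)
  have TE: "T n e \<le> 4 * E" using TS S_le_E[of n "Suc e"] unfolding S_def by linarith
  have "w d * F n (n + d) = exp (- real e) * F n (n + Suc e)" by (simp add: w_def Suc)
  also have "\<dots> \<le> exp (- real e) * (2 ^ e * T n e * exp (T n e))"
    by (intro mult_left_mono F_chain) simp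
  also have "\<dots> \<le> exp (- real e) * (2 ^ e * (4 * S) * exp (4 * E))"
    by (intro mult_left_mono mult_mono TS T_nonneg) (use TE S0 in auto)
  also have "\<dots> = (exp (- real e) * 2 ^ e) * (4 * exp (4 * E) * S)" by (simp only: mult_ac)
  also have "\<dots> = q ^ e * (4 * exp (4 * E) * S)" by (simp only: w_pow)
  also have "\<dots> \<le> (2 * q ^ Suc e) * (4 * exp (4 * E) * S)"
  proof (rule mult_right_mono)
    have "1 * q ^ e \<le> (2 * q) * q ^ e" using q_bounds by (intro mult_right_mono) auto
    thus "q ^ e \<le> 2 * q ^ Suc e" by (simp add: mult_ac)
  qed (use S0 in auto)
  also have "\<dots> = K * q ^ d * S" by (simp add: K_def Suc mult_ac)
  also have "\<dots> \<le> K * q ^ d * (\<Sum>j<Suc d. eps (n + j))"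
    unfolding S_def Suc using q_bounds
    by (intro mult_left_mono sum_mono2) (auto simp: eps_nonneg K_def)
  finally show ?thesis .
qed

end

context disc_fin begin
lemma total_bound: "(\<Sum>n. \<Sum>d. ennreal (w d * F n (n + d))) \<le> ennreal (200 * E * exp (4 * E))"
proof -
  have K0: "0 \<le> K" by (simp add: K_def)
  have q0: "0 \<le> q" using q_bounds by simp
  have "(\<Sum>n. \<Sum>d. ennreal (w d * F n (n + d))) \<le>
        (\<Sum>n. \<Sum>d. ennreal (K * q ^ d * (\<Sum>j<Suc d. eps (n + j))))"
    by (intro suminf_le summableI ennreal_leI cell_bound)
  also have "\<dots> = (\<Sum>n. \<Sum>d. \<Sum>j<Suc d. ennreal (K * q ^ d) * ennreal (eps (n + j)))"
  proof -
    have "ennreal (K * q ^ d * (\<Sum>j<Suc d. eps (n + j))) = (\<Sum>j<Suc d. ennreal (K * q ^ d) * ennreal (eps (n + j)))" for n d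
    proof -
      have "ennreal (K * q ^ d * (\<Sum>j<Suc d. eps (n + j))) = (\<Sum>j<Suc d. ennreal (K * q ^ d * eps (n + j)))"
        unfolding sum_distrib_left using K0 q0 eps_nonneg by (subst sum_ennreal) auto
      also have "\<dots> = (\<Sum>j<Suc d. ennreal (K * q ^ d) * ennreal (eps (n + j)))"
        using K0 q0 eps_nonneg by (intro sum.cong refl) (simp add: ennreal_mult)
      finally show ?thesis .
    qed
    thus ?thesis by simp
  qed
  also have "\<dots> = (\<Sum>d. \<Sum>n. \<Sum>j<Suc d. ennreal (K * q ^ d) * ennreal (eps (n + j)))"
    by (rule ennreal_suminf_swap)
  also have "\<dots> = (\<Sum>d. \<Sum>j<Suc d. ennreal (K * q ^ d) * (\<Sum>n. ennreal (eps (n + j))))"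
    by (subst suminf_sum) (auto simp: summableI)
  also have "\<dots> \<le> (\<Sum>d. \<Sum>j<Suc d. ennreal (K * q ^ d) * ennreal E)"
    using ennreal_suminf_shift_le[of "\<lambda>n. ennreal (eps n)"]
    by (intro suminf_le summableI sum_mono mult_left_mono) (auto simp: E_eq)
  also have "\<dots> = (\<Sum>d. ennreal (K * E * (of_nat (Suc d) * q ^ d)))"
  proof -
    have "(\<Sum>j<Suc d. ennreal (K * q ^ d) * ennreal E) = ennreal (K * E * (of_nat (Suc d) * q ^ d))" for d
      using K0 q0 E_nonneg by (simp add: ennreal_mult[symmetric] ennreal_of_nat_eq_real_of_nat)
         (simp add: algebra_simps ennreal_mult[symmetric])
    thus ?thesis by simp
  qed
  also have "\<dots> = ennreal (K * E * (1 / (1 - q)^2))"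
  proof -
    have s: "(\<lambda>d. of_nat (Suc d) * q ^ d) sums (1 / (1 - q)^2)"
      by (rule geometric_deriv_sums) (use q_bounds in auto)
    have "(\<lambda>d. K * E * (of_nat (Suc d) * q ^ d)) sums (K * E * (1 / (1 - q)^2))"
      by (rule sums_mult[OF s])
    thus ?thesis using K0 q0 E_nonneg
      by (subst suminf_ennreal2) (auto simp: sums_iff)
  qed
  also have "\<dots> \<le> ennreal (200 * E * exp (4 * E))"
  proof (rule ennreal_leI)
    have "1/5 \<le> 1 - q" using q_bounds by simp
    hence "(1/5)^2 \<le> (1 - q)^2" by (intro power_mono) auto
    moreover have "0 < (1 - q)^2" using q_bounds by simp
    ultimately have "1 / (1 - q)^2 \<le> 25" by (simp add: divide_le_eq mult.commute power2_eq_square)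
    hence "K * E * (1 / (1 - q)^2) \<le> K * E * 25" using K0 E_nonneg by (intro mult_left_mono) auto
    thus "K * E * (1 / (1 - q)^2) \<le> 200 * E * exp (4 * E)" by (simp add: K_def mult_ac)
  qed
  finally show ?thesis .
qed
end

definition Qs :: "nat \<Rightarrow> real set" where "Qs n = {real n..<real n + 1}"

lemma Qs_sets[measurable]: "Qs n \<in> sets lborel" by (simp add: Qs_def)
lemma Qs_meas: "emeasure lborel (Qs n) = 1" by (simp add: Qs_def)

lemma ennreal_minus2: "ennreal r - 2 = ennreal (r - 2)"
  using ennreal_minus[of 2 r] by simp

lemma G2:
  fixes u v :: "real \<Rightarrow> real" and S :: "real set"
  assumes S: "S \<in> sets lborel" "emeasure lborel S = 1"
    and um: "u \<in> borel_measurable lborel" and vm: "v \<in> borel_measurable lborel"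
    and u0: "\<And>x. 0 \<le> u x" and v0: "\<And>x. 0 \<le> v x"
    and ae: "AE x in lborel. x \<in> S \<longrightarrow> 2 \<le> u x + v x"
    and U: "(\<integral>\<^sup>+x\<in>S. ennreal (u x) \<partial>lborel) = ennreal U"
    and V: "(\<integral>\<^sup>+x\<in>S. ennreal (v x) \<partial>lborel) = ennreal V"
    and U0: "0 \<le> U" and V0: "0 \<le> V"
  shows "(\<integral>\<^sup>+x\<in>S. ennreal (u x + v x - 2) \<partial>lborel) = ennreal (U + V - 2)"
proof -
  have "(\<integral>\<^sup>+x\<in>S. ennreal (u x + v x - 2) \<partial>lborel)
      = (\<integral>\<^sup>+x. ennreal (u x + v x) * indicator S x - 2 * indicator S x \<partial>lborel)"
  proof (rule nn_integral_cong_AE)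
    show "AE x in lborel. ennreal (u x + v x - 2) * indicator S x =
                          ennreal (u x + v x) * indicator S x - 2 * indicator S x"
      using ae by eventually_elim (auto simp: indicator_def ennreal_minus2)
  qed
  also have "\<dots> = (\<integral>\<^sup>+x. ennreal (u x + v x) * indicator S x \<partial>lborel) - (\<integral>\<^sup>+x. 2 * indicator S x \<partial>lborel)"
  proof (rule nn_integral_diff)
    show "(\<lambda>x. ennreal (u x + v x) * indicator S x) \<in> borel_measurable lborel" using um vm S by measurable
    show "(\<lambda>x. 2 * indicator S x :: ennreal) \<in> borel_measurable lborel" using S by measurable
    show "(\<integral>\<^sup>+x. 2 * indicator S x \<partial>lborel) \<noteq> \<infinity>" using S by (simp add: nn_integral_cmult_indicator)
    show "AE x in lborel. 2 * indicator S x \<le> ennreal (u x + v x) * (indicator S x :: ennreal)"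
      using ae by eventually_elim (auto simp: indicator_def)
  qed
  also have "(\<integral>\<^sup>+x. ennreal (u x + v x) * indicator S x \<partial>lborel)
      = (\<integral>\<^sup>+x. ennreal (u x) * indicator S x + ennreal (v x) * indicator S x \<partial>lborel)"
    using u0 v0 by (intro nn_integral_cong) (simp add: ennreal_plus distrib_right)
  also have "\<dots> = ennreal U + ennreal V"
    using U V um vm S by (subst nn_integral_add) auto
  also have "(\<integral>\<^sup>+x. 2 * indicator S x \<partial>lborel) = 2" using S by (simp add: nn_integral_cmult_indicator)
  finally show ?thesis using U0 V0 by (simp add: ennreal_plus[symmetric] ennreal_minus2 del: ennreal_plus)
qed

lemma exp_int: "(\<integral>\<^sup>+s\<in>{r..}. ennreal (2 * exp (r - s)) \<partial>lborel) = 2"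
proof -
  have "(\<integral>\<^sup>+s\<in>{r..}. ennreal (2 * exp (r - s)) \<partial>lborel) = ennreal (0 - (- 2 * exp (r - r)))"
  proof (rule nn_integral_FTC_atLeast[where F="\<lambda>s. - 2 * exp (r - s)" and T=0])
    show "(\<lambda>s. 2 * exp (r - s)) \<in> borel_measurable borel" by measurable
    show "((\<lambda>s. - 2 * exp (r - s)) has_real_derivative 2 * exp (r - x)) (at x)" if "r \<le> x" for x
      by (auto intro!: derivative_eq_intros)
    show "((\<lambda>s. - 2 * exp (r - s)) \<longlongrightarrow> 0) at_top"
      by real_asymp
  qed auto
  thus ?thesis by simp
qed


lemma Ivl_split: "indicator (Ivl (real n) 2) x = (indicator (Qs n) x + indicator (Qs (Suc n)) x :: ennreal)"
  by (auto simp: Ivl_def Qs_def indicator_def)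

lemma avg_split:
  assumes f: "f \<in> borel_measurable borel"
  shows "avg (Ivl (real n) 2) f = ((\<integral>\<^sup>+x\<in>Qs n. f x \<partial>lborel) + (\<integral>\<^sup>+x\<in>Qs (Suc n). f x \<partial>lborel)) / 2"
proof -
  have "(\<integral>\<^sup>+x\<in>Ivl (real n) 2. f x \<partial>lborel) = (\<integral>\<^sup>+x. f x * indicator (Qs n) x + f x * indicator (Qs (Suc n)) x \<partial>lborel)"
    by (intro nn_integral_cong) (simp add: Ivl_split distrib_left)
  also have "\<dots> = (\<integral>\<^sup>+x\<in>Qs n. f x \<partial>lborel) + (\<integral>\<^sup>+x\<in>Qs (Suc n). f x \<partial>lborel)"
    using f by (intro nn_integral_add) auto
  finally show ?thesis unfolding avg_def by (simp add: Ivl_def)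
qed

lemma term_top: "(x::ennreal) / 2 * (y / 2) - 1 < \<infinity> \<Longrightarrow> y = \<infinity> \<Longrightarrow> x = 0"
proof (rule ccontr)
  assume a: "x / 2 * (y / 2) - 1 < \<infinity>" "y = \<infinity>" "x \<noteq> 0"
  have "y / 2 = \<infinity>" using a by (simp add: ennreal_divide_eq_top_iff)
  moreover have "x / 2 \<noteq> 0" using a by (simp add: ennreal_divide_eq_0_iff)
  ultimately have "x / 2 * (y / 2) = \<infinity>" by (simp add: ennreal_mult_eq_top_iff)
  thus False using a by simp
qed

lemma term_top': "(x::ennreal) / 2 * (y / 2) - 1 < \<infinity> \<Longrightarrow> y \<noteq> 0 \<Longrightarrow> x \<noteq> \<infinity>"
  using term_top[of y x] by (auto simp: mult.commute)

lemma Qs_borel[measurable]: "Qs n \<in> sets borel" by (simp add: Qs_def)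

definition aI :: "(real \<Rightarrow> real) \<Rightarrow> nat \<Rightarrow> ennreal" where
  "aI h n = (\<integral>\<^sup>+x\<in>Qs n. ennreal (h x) \<partial>lborel)"
definition bI :: "(real \<Rightarrow> real) \<Rightarrow> nat \<Rightarrow> ennreal" where
  "bI h n = (\<integral>\<^sup>+x\<in>Qs n. inverse (ennreal (h x)) \<partial>lborel)"

context
  fixes h :: "real \<Rightarrow> real"
  assumes hm[measurable]: "h \<in> borel_measurable borel" and h0: "\<And>x. 0 \<le> h x"
begin


lemma A2l1_eq: "A2l1 h = (\<Sum>n. (aI h n + aI h (Suc n)) / 2 * ((bI h n + bI h (Suc n)) / 2) - 1)"
  unfolding A2l1_def aI_def bI_def by (subst avg_split, measurable)+

lemma a0_binf: assumes "aI h k = 0" shows "bI h k = \<infinity>"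
proof -
  have "AE x in lborel. ennreal (h x) * indicator (Qs k) x = 0"
    using assms unfolding aI_def by (subst nn_integral_0_iff_AE[symmetric]) auto
  hence "AE x in lborel. inverse (ennreal (h x)) * indicator (Qs k) x = \<infinity> * indicator (Qs k) x"
    by eventually_elim (auto simp: indicator_def)
  hence "bI h k = (\<integral>\<^sup>+x. \<infinity> * indicator (Qs k) x \<partial>lborel)"
    unfolding bI_def by (rule nn_integral_cong_AE)
  also have "\<dots> = \<infinity>" by (subst nn_integral_cmult_indicator) (auto simp: Qs_meas)
  finally show ?thesis .
qed

lemma b_pos: "bI h k \<noteq> 0"
proof
  assume "bI h k = 0"
  hence "AE x in lborel. inverse (ennreal (h x)) * indicator (Qs k) x = 0"
    unfolding bI_def by (subst nn_integral_0_iff_AE[symmetric]) auto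
  hence "AE x in lborel. x \<notin> Qs k"
    by eventually_elim (auto simp: indicator_def)
  hence "emeasure lborel (Qs k) = 0"
    by (subst (asm) AE_iff_measurable[of "Qs k"]) auto
  thus False by (simp add: Qs_meas)
qed

context
  assumes fin: "A2l1 h < \<infinity>"
begin

lemma term_fin: "(aI h n + aI h (Suc n)) / 2 * ((bI h n + bI h (Suc n)) / 2) - 1 < \<infinity>"
  using ennreal_le_suminf[of "\<lambda>n. (aI h n + aI h (Suc n)) / 2 * ((bI h n + bI h (Suc n)) / 2) - 1" n]
    fin unfolding A2l1_eq by auto

lemma binf_step: "bI h k = \<infinity> \<longleftrightarrow> bI h (Suc k) = \<infinity>"
proof -
  have "aI h k = 0 \<and> aI h (Suc k) = 0" if "bI h k = \<infinity> \<or> bI h (Suc k) = \<infinity>"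
    using term_top[OF term_fin[of k]] that by auto
  thus ?thesis using a0_binf by blast
qed

lemma binf_all: "bI h k = \<infinity> \<longleftrightarrow> bI h 0 = \<infinity>"
  by (induction k) (use binf_step in auto)

lemma a_fin: "aI h k \<noteq> \<infinity>"
proof
  assume "aI h k = \<infinity>"
  hence "aI h k + aI h (Suc k) = \<infinity>" by simp
  moreover have "bI h k + bI h (Suc k) \<noteq> 0" using b_pos[of k] by simp
  ultimately show False using term_top'[OF term_fin[of k]] by auto
qed

end
end

lemma Qs_floor: "0 \<le> x \<Longrightarrow> x \<in> Qs (nat \<lfloor>x\<rfloor>)"
  by (auto simp: Qs_def)

lemma ennreal_div2: "0 \<le> x \<Longrightarrow> ennreal x / 2 = ennreal (x / 2)"
  using divide_ennreal[of x 2] by simp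

lemma ennreal_2lam:
  assumes "0 < l" "0 \<le> (t::real)"
  shows "ennreal (2 * l) \<le> ennreal t + ennreal (l^2) * inverse (ennreal t)"
proof (cases "t = 0")
  case True
  thus ?thesis using assms by simp
next
  case False
  hence t: "0 < t" using assms by simp
  have "2 * l * t \<le> t * t + l^2" using zero_le_power2[of "t - l"] by (simp add: power2_eq_square algebra_simps)
  hence r: "2 * l \<le> t + l^2 / t" using t by (simp add: field_simps)
  have eq: "ennreal (t + l^2 / t) = ennreal t + ennreal (l^2) * inverse (ennreal t)"
    using t by (simp add: inverse_ennreal ennreal_plus ennreal_mult[symmetric] divide_inverse)
  show ?thesis using ennreal_leI[OF r] eq by simp
qed

definition "Aq h k = enn2real (aI h k)"
definition "Bq h k = enn2real (bI h k)"

context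
  fixes h :: "real \<Rightarrow> real"
  assumes hm[measurable]: "h \<in> borel_measurable borel" and h0: "\<And>x. 0 \<le> h x"
    and fin: "A2l1 h < \<infinity>" and nd: "bI h 0 \<noteq> \<infinity>"
begin

lemma b_fin: "bI h k \<noteq> \<infinity>" using binf_all[OF hm h0 fin, of k] nd by simp

lemma hpos_Q: "AE x in lborel. x \<in> Qs k \<longrightarrow> 0 < h x"
proof -
  have "AE x in lborel. inverse (ennreal (h x)) * indicator (Qs k) x \<noteq> \<infinity>"
    using b_fin[of k] by (intro nn_integral_PInf_AE) (auto simp: bI_def)
  thus ?thesis
  proof eventually_elim
    case (elim x)
    show ?case
    proof
      assume "x \<in> Qs k"
      with elim have "h x \<noteq> 0" by auto
      thus "0 < h x" using h0[of x] by simp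
    qed
  qed
qed

lemma hpos_ae: "AE x in lborel. 0 \<le> x \<longrightarrow> 0 < h x"
proof -
  have "AE x in lborel. \<forall>k. x \<in> Qs k \<longrightarrow> 0 < h x"
    using hpos_Q by (subst AE_all_countable) auto
  thus ?thesis by eventually_elim (use Qs_floor in blast)
qed


lemma a_lt: "aI h k < \<infinity>" using a_fin[OF hm h0 fin, of k] by (simp add: less_top)
lemma b_lt: "bI h k < \<infinity>" using b_fin[of k] by (simp add: less_top)

lemma a_eq: "aI h k = ennreal (Aq h k)"
  using a_lt[of k] by (simp add: Aq_def)
lemma b_eq: "bI h k = ennreal (Bq h k)"
  using b_lt[of k] by (simp add: Bq_def)

lemma Aq_pos: "0 < Aq h k"
proof -
  have "aI h k \<noteq> 0" using a0_binf[OF hm h0, of k] b_fin[of k] by auto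
  hence "0 < aI h k" by (simp add: zero_less_iff_neq_zero)
  thus ?thesis unfolding Aq_def using a_lt[of k] by (simp add: enn2real_positive_iff)
qed

lemma Bq_pos: "0 < Bq h k"
proof -
  have "bI h k \<noteq> 0" using b_pos[OF hm h0, of k] .
  hence "0 < bI h k" by (simp add: zero_less_iff_neq_zero)
  thus ?thesis unfolding Bq_def using b_lt[of k] by (simp add: enn2real_positive_iff)
qed

lemma AB_ge: "1 \<le> Aq h k * Bq h k"
proof -
  define l where "l = 1 / Bq h k"
  have l0: "0 < l" using Bq_pos[of k] by (simp add: l_def)
  have "ennreal (2 * l) = (\<integral>\<^sup>+x\<in>Qs k. ennreal (2 * l) \<partial>lborel)"
    by (simp add: nn_integral_cmult_indicator Qs_meas)
  also have "\<dots> \<le> (\<integral>\<^sup>+x\<in>Qs k. (ennreal (h x) + ennreal (l^2) * inverse (ennreal (h x))) \<partial>lborel)"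
    by (intro nn_integral_mono mult_right_mono ennreal_2lam l0 h0) auto
  also have "\<dots> = (\<integral>\<^sup>+x. ennreal (h x) * indicator (Qs k) x + ennreal (l^2) * (inverse (ennreal (h x)) * indicator (Qs k) x) \<partial>lborel)"
    by (intro nn_integral_cong) (simp add: distrib_right mult.assoc)
  also have "\<dots> = aI h k + ennreal (l^2) * bI h k"
    unfolding aI_def bI_def by (subst nn_integral_add) (auto simp: nn_integral_cmult)
  also have "\<dots> = ennreal (Aq h k + l^2 * Bq h k)"
    using Aq_pos[of k] Bq_pos[of k] by (simp add: a_eq b_eq ennreal_mult[symmetric] ennreal_plus[symmetric] del: ennreal_plus)
  finally have "2 * l \<le> Aq h k + l^2 * Bq h k"
    using Aq_pos[of k] Bq_pos[of k] by (subst (asm) ennreal_le_iff) auto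
  hence "2 / Bq h k \<le> Aq h k + 1 / Bq h k" using Bq_pos[of k] by (simp add: l_def power2_eq_square)
  hence "1 / Bq h k \<le> Aq h k" by simp
  thus ?thesis using Bq_pos[of k] by (simp add: field_simps)
qed

interpretation disc "Aq h" "Bq h"
  by unfold_locales (auto intro: Aq_pos Bq_pos AB_ge)

lemma A2l1_eps: "A2l1 h = (\<Sum>n. ennreal (eps n))"
proof -
  have "(aI h n + aI h (Suc n)) / 2 * ((bI h n + bI h (Suc n)) / 2) - 1 = ennreal (eps n)" for n
  proof -
    have "(aI h n + aI h (Suc n)) / 2 * ((bI h n + bI h (Suc n)) / 2) - 1
        = ennreal ((Aq h n + Aq h (Suc n)) / 2 * ((Bq h n + Bq h (Suc n)) / 2)) - ennreal 1"
      using Aq_pos[of n] Aq_pos[of "Suc n"] Bq_pos[of n] Bq_pos[of "Suc n"]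
      by (simp add: a_eq b_eq ennreal_plus[symmetric] ennreal_div2 ennreal_mult[symmetric] del: ennreal_plus)
    also have "\<dots> = ennreal (eps n)" by (subst ennreal_minus) (auto simp: eps_def)
    finally show ?thesis .
  qed
  thus ?thesis by (simp add: A2l1_eq[OF hm h0])
qed

interpretation disc_fin "Aq h" "Bq h"
  by unfold_locales (use fin A2l1_eps in auto)

end

lemma int_scale:
  assumes "(\<integral>\<^sup>+x\<in>S. ennreal (f x) \<partial>lborel) = ennreal F" "0 \<le> c"
    "f \<in> borel_measurable lborel" "S \<in> sets lborel"
  shows "(\<integral>\<^sup>+x\<in>S. ennreal (c * f x) \<partial>lborel) = ennreal (c * F)"
proof -
  have "(\<integral>\<^sup>+x\<in>S. ennreal (c * f x) \<partial>lborel) = (\<integral>\<^sup>+x. ennreal c * (ennreal (f x) * indicator S x) \<partial>lborel)"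
    using assms(2) by (intro nn_integral_cong) (simp add: ennreal_mult' mult.assoc)
  also have "\<dots> = ennreal c * ennreal F" using assms by (subst nn_integral_cmult) auto
  also have "\<dots> = ennreal (c * F)" using assms(2) by (simp add: ennreal_mult')
  finally show ?thesis .
qed

context
  fixes h :: "real \<Rightarrow> real"
  assumes hm[measurable]: "h \<in> borel_measurable borel" and h0: "\<And>x. 0 \<le> h x"
    and fin: "A2l1 h < \<infinity>" and nd: "bI h 0 \<noteq> \<infinity>"
begin

lemmas Aq_pos_M4 = Aq_pos[OF hm h0 fin nd] and Bq_pos_M4 = Bq_pos[OF hm h0 fin nd]
  and AB_ge_M4 = AB_ge[OF hm h0 fin nd] and hpos_Q_M4 = hpos_Q[OF hm h0 fin nd]
  and hpos_ae_M4 = hpos_ae[OF hm h0 fin nd] and a_eq_M4 = a_eq[OF hm h0 fin nd]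
  and b_eq_M4 = b_eq[OF hm h0 fin nd] and A2l1_eps_M4 = A2l1_eps[OF hm h0 fin nd]

lemma Aq_nn: "0 \<le> Aq h k" using Aq_pos_M4[of k] by simp
lemma Bq_nn: "0 \<le> Bq h k" using Bq_pos_M4[of k] by simp

interpretation disc "Aq h" "Bq h"
  by unfold_locales (auto intro: Aq_pos_M4 Bq_pos_M4 AB_ge_M4)

interpretation disc_fin "Aq h" "Bq h"
  by unfold_locales (use fin A2l1_eps_M4 in auto)

lemma aR: "(\<integral>\<^sup>+x\<in>Qs m. ennreal (h x) \<partial>lborel) = ennreal (Aq h m)"
  using a_eq_M4[of m] by (simp add: aI_def)

lemma bR: "(\<integral>\<^sup>+x\<in>Qs m. ennreal (1 / h x) \<partial>lborel) = ennreal (Bq h m)"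
proof -
  have "(\<integral>\<^sup>+x\<in>Qs m. ennreal (1 / h x) \<partial>lborel) = bI h m"
    unfolding bI_def
  proof (rule nn_integral_cong_AE)
    show "AE x in lborel. ennreal (1 / h x) * indicator (Qs m) x = inverse (ennreal (h x)) * indicator (Qs m) x"
      using hpos_Q_M4[of m] by eventually_elim (auto simp: indicator_def inverse_ennreal divide_inverse)
  qed
  thus ?thesis using b_eq_M4 by simp
qed

lemma inner:
  assumes r: "0 < h r"
  shows "(\<integral>\<^sup>+s\<in>Qs m. ennreal (1 / h r * h s + h r * (1 / h s) - 2) \<partial>lborel)
       = ennreal (1 / h r * Aq h m + h r * Bq h m - 2)"
proof (rule G2)
  show "(\<integral>\<^sup>+s\<in>Qs m. ennreal (1 / h r * h s) \<partial>lborel) = ennreal (1 / h r * Aq h m)"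
    using r by (intro int_scale aR) auto
  show "(\<integral>\<^sup>+s\<in>Qs m. ennreal (h r * (1 / h s)) \<partial>lborel) = ennreal (h r * Bq h m)"
    using r by (intro int_scale bR) auto
  show "AE s in lborel. s \<in> Qs m \<longrightarrow> 2 \<le> 1 / h r * h s + h r * (1 / h s)"
    using hpos_Q_M4[of m]
  proof eventually_elim
    case (elim s)
    show ?case
    proof
      assume "s \<in> Qs m"
      hence s: "0 < h s" using elim by auto
      show "2 \<le> 1 / h r * h s + h r * (1 / h s)"
        by (rule two_le_sum) (use r s in auto)
    qed
  qed
qed (use r h0 Aq_pos_M4 Bq_pos_M4 in \<open>auto simp: Qs_meas Aq_nn Bq_nn intro!: mult_nonneg_nonneg divide_nonneg_nonneg\<close>)

lemma outer:
  "(\<integral>\<^sup>+r\<in>Qs n. ennreal (1 / h r * Aq h m + h r * Bq h m - 2) \<partial>lborel) = ennreal (F n m)"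
proof -
  have "(\<integral>\<^sup>+r\<in>Qs n. ennreal (Aq h m * (1 / h r) + Bq h m * h r - 2) \<partial>lborel)
      = ennreal (Aq h m * Bq h n + Bq h m * Aq h n - 2)"
  proof (rule G2)
    show "(\<integral>\<^sup>+r\<in>Qs n. ennreal (Aq h m * (1 / h r)) \<partial>lborel) = ennreal (Aq h m * Bq h n)"
      using Aq_pos_M4[of m] by (intro int_scale bR) auto
    show "(\<integral>\<^sup>+r\<in>Qs n. ennreal (Bq h m * h r) \<partial>lborel) = ennreal (Bq h m * Aq h n)"
      using Bq_pos_M4[of m] by (intro int_scale aR) auto
    show "AE r in lborel. r \<in> Qs n \<longrightarrow> 2 \<le> Aq h m * (1 / h r) + Bq h m * h r"
      using hpos_Q_M4[of n]
    proof eventually_elim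
      case (elim r)
      show ?case
      proof
        assume "r \<in> Qs n"
        hence r: "0 < h r" using elim by auto
        have "Aq h m * (1 / h r) * (Bq h m * h r) = Aq h m * Bq h m" using r by simp
        thus "2 \<le> Aq h m * (1 / h r) + Bq h m * h r"
          by (intro two_le_sum) (use r Aq_pos_M4[of m] Bq_pos_M4[of m] AB_ge_M4[of m] in auto)
      qed
    qed
  qed (use h0 Aq_pos_M4 Bq_pos_M4 in \<open>auto simp: Qs_meas Aq_nn Bq_nn intro!: mult_nonneg_nonneg divide_nonneg_nonneg\<close>)
  thus ?thesis by (simp add: F_def mult.commute)
qed

end

context
  fixes h :: "real \<Rightarrow> real"
  assumes hm[measurable]: "h \<in> borel_measurable borel" and h0: "\<And>x. 0 \<le> h x"
    and fin: "A2l1 h < \<infinity>" and nd: "bI h 0 \<noteq> \<infinity>"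
begin

lemmas Aq_pos_M5 = Aq_pos[OF hm h0 fin nd] and Bq_pos_M5 = Bq_pos[OF hm h0 fin nd]
  and AB_ge_M5 = AB_ge[OF hm h0 fin nd] and hpos_Q_M5 = hpos_Q[OF hm h0 fin nd]
  and hpos_ae_M5 = hpos_ae[OF hm h0 fin nd] and A2l1_eps_M5 = A2l1_eps[OF hm h0 fin nd]
  and inner_M5 = inner[OF hm h0 fin nd] and outer_M5 = outer[OF hm h0 fin nd]

interpretation disc "Aq h" "Bq h"
  by unfold_locales (auto intro: Aq_pos_M5 Bq_pos_M5 AB_ge_M5)

interpretation disc_fin "Aq h" "Bq h"
  by unfold_locales (use fin A2l1_eps_M5 in auto)

lemma w_nn: "0 \<le> w d" by (simp add: w_def split: nat.split)

lemma w_bound: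
  assumes "0 \<le> r" "r \<le> s" "s \<in> Qs (nat \<lfloor>r\<rfloor> + d)"
  shows "exp (r - s) \<le> w d"
proof (cases d)
  case 0
  thus ?thesis using assms by (simp add: w_def)
next
  case (Suc e)
  have "r < real (nat \<lfloor>r\<rfloor>) + 1" using assms(1) by linarith
  moreover have "real (nat \<lfloor>r\<rfloor> + d) \<le> s" using assms(3) by (simp add: Qs_def)
  ultimately have "r - s \<le> - real e" using Suc by simp
  thus ?thesis using Suc by (simp add: w_def)
qed

definition "Phi r s = 1 / h r * h s + h r * (1 / h s) - 2"

lemma k1:
  assumes hr: "0 < h r"
  shows "kappa h r = (\<integral>\<^sup>+s\<in>{r..}. ennreal (exp (r - s) * (1 / h r * h s)) \<partial>lborel)"
proof -
  have "kappa h r = (\<integral>\<^sup>+s\<in>{r..}. ennreal (h s * exp (r - s)) \<partial>lborel) * ennreal (1 / h r)"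
    unfolding kappa_def divide_ennreal_def using hr by (simp add: inverse_ennreal divide_inverse)
  also have "\<dots> = (\<integral>\<^sup>+s. ennreal (h s * exp (r - s)) * indicator {r..} s * ennreal (1 / h r) \<partial>lborel)"
    by (subst nn_integral_multc) auto
  also have "\<dots> = (\<integral>\<^sup>+s\<in>{r..}. ennreal (exp (r - s) * (1 / h r * h s)) \<partial>lborel)"
    using hr h0 by (intro nn_integral_cong) (simp add: ennreal_mult'[symmetric] mult_ac)
  finally show ?thesis .
qed

lemma k2:
  assumes r: "0 < r" and hr: "0 < h r"
  shows "kappa_d h r = (\<integral>\<^sup>+s\<in>{r..}. ennreal (exp (r - s) * (h r * (1 / h s))) \<partial>lborel)"
proof -
  have "kappa_d h r = (\<integral>\<^sup>+s. ennreal (h r) * (inverse (ennreal (h s)) * ennreal (exp (r - s)) * indicator {r..} s) \<partial>lborel)"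
    unfolding kappa_d_def by (subst nn_integral_cmult) auto
  also have "\<dots> = (\<integral>\<^sup>+s\<in>{r..}. ennreal (exp (r - s) * (h r * (1 / h s))) \<partial>lborel)"
    using hpos_ae_M5
  proof (intro nn_integral_cong_AE, eventually_elim)
    case (elim s)
    show ?case
    proof (cases "r \<le> s")
      case True
      hence "0 < h s" using elim r by auto
      thus ?thesis using True hr
        by (simp add: inverse_ennreal ennreal_mult'[symmetric] divide_inverse mult_ac)
    qed simp
  qed
  finally show ?thesis .
qed


lemma kk:
  assumes r: "0 < r" and hr: "0 < h r"
  shows "kappa h r + kappa_d h r - 2 = (\<integral>\<^sup>+s\<in>{r..}. ennreal (exp (r - s) * Phi r s) \<partial>lborel)"
proof -
  have "kappa h r + kappa_d h r = (\<integral>\<^sup>+s. ennreal (exp (r - s) * (1 / h r * h s)) * indicator {r..} s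
         + ennreal (exp (r - s) * (h r * (1 / h s))) * indicator {r..} s \<partial>lborel)"
    unfolding k1[OF hr] k2[OF r hr] by (subst nn_integral_add) auto
  also have "\<dots> = (\<integral>\<^sup>+s. ennreal (exp (r - s) * Phi r s) * indicator {r..} s
         + ennreal (2 * exp (r - s)) * indicator {r..} s \<partial>lborel)"
    using hpos_ae_M5
  proof (intro nn_integral_cong_AE, eventually_elim)
    case (elim s)
    show ?case
    proof (cases "r \<le> s")
      case True
      hence s: "0 < h s" using elim r by auto
      have "2 \<le> 1 / h r * h s + h r * (1 / h s)" by (rule two_le_sum) (use hr s in auto)
      hence "0 \<le> Phi r s" by (simp add: Phi_def)
      have "ennreal (exp (r - s) * (1 / h r * h s)) + ennreal (exp (r - s) * (h r * (1 / h s)))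
          = ennreal (exp (r - s) * (1 / h r * h s) + exp (r - s) * (h r * (1 / h s)))"
        using hr s by (subst ennreal_plus) auto
      also have "\<dots> = ennreal (exp (r - s) * Phi r s + 2 * exp (r - s))"
        by (simp add: Phi_def algebra_simps)
      also have "\<dots> = ennreal (exp (r - s) * Phi r s) + ennreal (2 * exp (r - s))"
        using \<open>0 \<le> Phi r s\<close> by (subst ennreal_plus) auto
      finally show ?thesis using True by simp
    qed simp
  qed
  also have "\<dots> = (\<integral>\<^sup>+s\<in>{r..}. ennreal (exp (r - s) * Phi r s) \<partial>lborel) + 2"
    unfolding Phi_def by (subst nn_integral_add) (auto simp: exp_int)
  finally show ?thesis by simp
qed

lemma pw:
  assumes r: "0 < r" and hr: "0 < h r"
  shows "kappa h r + kappa_d h r - 2 \<le>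
    (\<Sum>d. ennreal (w d) * ennreal (1 / h r * Aq h (nat \<lfloor>r\<rfloor> + d) + h r * Bq h (nat \<lfloor>r\<rfloor> + d) - 2))"
proof -
  define n where "n = nat \<lfloor>r\<rfloor>"
  have "kappa h r + kappa_d h r - 2 = (\<integral>\<^sup>+s\<in>{r..}. ennreal (exp (r - s) * Phi r s) \<partial>lborel)"
    by (rule kk[OF r hr])
  also have "\<dots> \<le> (\<integral>\<^sup>+s. (\<Sum>d. ennreal (w d) * (ennreal (Phi r s) * indicator (Qs (n + d)) s)) \<partial>lborel)"
  proof (intro nn_integral_mono)
    fix s
    show "ennreal (exp (r - s) * Phi r s) * indicator {r..} s \<le> (\<Sum>d. ennreal (w d) * (ennreal (Phi r s) * indicator (Qs (n + d)) s))"
    proof (cases "r \<le> s")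
      case True
      define d where "d = nat \<lfloor>s\<rfloor> - n"
      have "\<lfloor>r\<rfloor> \<le> \<lfloor>s\<rfloor>" using True by (rule floor_mono)
      hence "n + d = nat \<lfloor>s\<rfloor>" unfolding d_def n_def by linarith
      hence sQ: "s \<in> Qs (n + d)" using Qs_floor[of s] True r by simp
      have "ennreal (exp (r - s) * Phi r s) \<le> ennreal (w d * Phi r s)"
      proof (cases "0 \<le> Phi r s")
        case True
        thus ?thesis using w_bound[of r s d] sQ \<open>r \<le> s\<close> r unfolding n_def
          by (intro ennreal_leI mult_right_mono) auto
      next
        case False
        hence "exp (r - s) * Phi r s \<le> 0" by (intro mult_nonneg_nonpos) auto
        thus ?thesis by (simp add: ennreal_neg)
      qed
      also have "\<dots> = ennreal (w d) * (ennreal (Phi r s) * indicator (Qs (n + d)) s)"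
        using sQ w_nn[of d] by (simp add: ennreal_mult')
      also have "\<dots> \<le> (\<Sum>d. ennreal (w d) * (ennreal (Phi r s) * indicator (Qs (n + d)) s))"
        by (rule ennreal_le_suminf[of "\<lambda>d. ennreal (w d) * (ennreal (Phi r s) * indicator (Qs (n + d)) s)"])
      finally show ?thesis using True by simp
    qed simp
  qed
  also have "\<dots> = (\<Sum>d. ennreal (w d) * (\<integral>\<^sup>+s\<in>Qs (n + d). ennreal (Phi r s) \<partial>lborel))"
    unfolding Phi_def by (subst nn_integral_suminf) (auto simp: nn_integral_cmult)
  also have "\<dots> = (\<Sum>d. ennreal (w d) * ennreal (1 / h r * Aq h (n + d) + h r * Bq h (n + d) - 2))"
    unfolding Phi_def by (simp only: inner_M5[OF hr])
  finally show ?thesis unfolding n_def .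
qed

end

context
  fixes h :: "real \<Rightarrow> real"
  assumes hm[measurable]: "h \<in> borel_measurable borel" and h0: "\<And>x. 0 \<le> h x"
    and fin: "A2l1 h < \<infinity>" and nd: "bI h 0 \<noteq> \<infinity>"
begin

lemmas Aq_pos_M6 = Aq_pos[OF hm h0 fin nd] and Bq_pos_M6 = Bq_pos[OF hm h0 fin nd]
  and AB_ge_M6 = AB_ge[OF hm h0 fin nd]
  and hpos_ae_M6 = hpos_ae[OF hm h0 fin nd] and A2l1_eps_M6 = A2l1_eps[OF hm h0 fin nd]
  and outer_M6 = outer[OF hm h0 fin nd] and pw_M6 = pw[OF hm h0 fin nd]

interpretation disc "Aq h" "Bq h"
  by unfold_locales (auto intro: Aq_pos_M6 Bq_pos_M6 AB_ge_M6)

interpretation disc_fin "Aq h" "Bq h"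
  by unfold_locales (use fin A2l1_eps_M6 in auto)

lemma w_nn_M6: "0 \<le> w d" by (simp add: w_def split: nat.split)

lemma main_nd: "h_int h \<le> ennreal (200 * enn2real (A2l1 h) * exp (200 * enn2real (A2l1 h)))"
proof -
  define G where "G n d r = ennreal (w d) * (ennreal (1 / h r * Aq h (n + d) + h r * Bq h (n + d) - 2) * indicator (Qs n) r)" for n d r
  have "h_int h \<le> (\<integral>\<^sup>+r. (\<Sum>n. \<Sum>d. G n d r) \<partial>lborel)"
    unfolding h_int_def using hpos_ae_M6
  proof (intro nn_integral_mono_AE, eventually_elim)
    case (elim r)
    show ?case
    proof (cases "0 < r")
      case True
      hence hr: "0 < h r" using elim by auto
      define n where "n = nat \<lfloor>r\<rfloor>"
      have rQ: "r \<in> Qs n" unfolding n_def using True by (intro Qs_floor) auto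
      have "kappa h r + kappa_d h r - 2 \<le> (\<Sum>d. G n d r)"
        using pw_M6[OF True hr] rQ unfolding G_def n_def by simp
      also have "\<dots> \<le> (\<Sum>n. \<Sum>d. G n d r)"
        by (rule ennreal_le_suminf[of "\<lambda>n. \<Sum>d. G n d r"])
      finally show ?thesis using True by simp
    qed simp
  qed
  also have "\<dots> = (\<Sum>n. \<Sum>d. ennreal (w d) * (\<integral>\<^sup>+r\<in>Qs n. ennreal (1 / h r * Aq h (n + d) + h r * Bq h (n + d) - 2) \<partial>lborel))"
    unfolding G_def by (subst nn_integral_suminf, measurable)+ (simp add: nn_integral_cmult)
  also have "\<dots> = (\<Sum>n. \<Sum>d. ennreal (w d * F n (n + d)))"
  proof -
    have "\<And>n d. ennreal (w d) * ennreal (F n (n+d)) = ennreal (w d * F n (n+d))"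
      using w_nn_M6 by (simp add: ennreal_mult')
    thus ?thesis by (simp only: outer_M6)
  qed
  also have "\<dots> \<le> ennreal (200 * E * exp (4 * E))" by (rule total_bound)
  also have "\<dots> \<le> ennreal (200 * enn2real (A2l1 h) * exp (200 * enn2real (A2l1 h)))"
  proof -
    have EA: "enn2real (A2l1 h) = E" using A2l1_eps_M6 E_eq E_nonneg by simp
    show ?thesis unfolding EA using E_nonneg
      by (intro ennreal_leI mult_left_mono) auto
  qed
  finally show ?thesis .
qed

end


lemma main_deg:
  assumes hm[measurable]: "h \<in> borel_measurable borel" and h0: "\<And>x. 0 \<le> h x"
    and fin: "A2l1 h < \<infinity>" and dg: "bI h 0 = \<infinity>"
  shows "h_int h = 0"
proof -
  have a0: "aI h k = 0" for k
  proof -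
    have "bI h k = \<infinity>" using binf_all[OF hm h0 fin, of k] dg by simp
    thus ?thesis using term_top[OF term_fin[OF hm h0 fin, of k]] by simp
  qed
  have "AE x in lborel. x \<in> Qs k \<longrightarrow> h x = 0" for k
  proof -
    have hz: "\<And>x. ennreal (h x) = 0 \<Longrightarrow> h x = 0" using h0 by (metis ennreal_eq_0_iff order_antisym)
    have "AE x in lborel. ennreal (h x) * indicator (Qs k) x = 0"
      using a0[of k] unfolding aI_def by (subst nn_integral_0_iff_AE[symmetric]) auto
    thus ?thesis
    proof eventually_elim
      case (elim x)
      show ?case
      proof
        assume "x \<in> Qs k"
        with elim have "ennreal (h x) = 0" by simp
        thus "h x = 0" by (rule hz)
      qed
    qed
  qed
  hence "AE x in lborel. \<forall>k. x \<in> Qs k \<longrightarrow> h x = 0" by (subst AE_all_countable) auto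
  hence z: "AE x in lborel. 0 \<le> x \<longrightarrow> h x = 0" by eventually_elim (use Qs_floor in blast)
  have ae: "AE r in lborel. (kappa h r + kappa_d h r - 2) * indicator {0<..} r = 0"
    using z
  proof eventually_elim
    case (elim r)
    show ?case
    proof (cases "0 < r")
      case True
      hence hr: "h r = 0" using elim by auto
      have ae2: "AE s in lborel. ennreal (h s * exp (r - s)) * indicator {r..} s = 0"
        using z
      proof eventually_elim
        case (elim s)
        thus ?case using True by (auto simp: indicator_def)
      qed
      have "(\<integral>\<^sup>+s\<in>{r..}. ennreal (h s * exp (r - s)) \<partial>lborel) = (\<integral>\<^sup>+(s::real). 0 \<partial>lborel)"
        using ae2 by (rule nn_integral_cong_AE)
      hence "kappa h r = 0" unfolding kappa_def by simp
      moreover have "kappa_d h r = 0" unfolding kappa_d_def using hr by simp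
      ultimately show ?thesis by simp
    qed simp
  qed
  have "h_int h = (\<integral>\<^sup>+(r::real). 0 \<partial>lborel)"
    unfolding h_int_def using ae by (rule nn_integral_cong_AE)
  thus ?thesis by simp
qed


lemma avg_cong: "(\<And>x. x \<in> S \<Longrightarrow> f x = g x) \<Longrightarrow> avg S f = avg S g"
  unfolding avg_def by (intro arg_cong2[where f="(/)"] nn_integral_cong refl) (auto simp: indicator_def)

lemma set_nn_cong: "(\<And>x. x \<in> S \<Longrightarrow> f x = g x) \<Longrightarrow> (\<integral>\<^sup>+x\<in>S. f x \<partial>M) = (\<integral>\<^sup>+x\<in>S. g x \<partial>M)"
  by (intro nn_integral_cong) (auto simp: indicator_def)

theorem proposition4p2:
  "\<exists>c::real. \<forall>h::real \<Rightarrow> real.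
     set_borel_measurable lborel {0..} h \<and> (\<forall>x\<ge>0. 0 \<le> h x) \<and> A2l1 h < \<infinity> \<longrightarrow>
     h_int h \<le> ennreal (c * enn2real (A2l1 h) * exp (c * enn2real (A2l1 h)))"
proof (intro exI[of _ 200] allI impI)
  fix h :: "real \<Rightarrow> real"
  assume H: "set_borel_measurable lborel {0..} h \<and> (\<forall>x\<ge>0. 0 \<le> h x) \<and> A2l1 h < \<infinity>"
  define g where "g x = indicator {0..} x * h x" for x
  have gm: "g \<in> borel_measurable borel"
    using H unfolding set_borel_measurable_def g_def by simp
  have g0: "0 \<le> g x" for x using H by (simp add: g_def indicator_def)
  have gh: "0 \<le> x \<Longrightarrow> g x = h x" for x by (simp add: g_def)
  have eqA: "A2l1 g = A2l1 h"
    unfolding A2l1_def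
  proof (intro suminf_cong arg_cong2[where f="(-)"] arg_cong2[where f="(*)"] refl avg_cong)
    fix n x assume "x \<in> Ivl (real n) 2"
    hence "0 \<le> x" by (simp add: Ivl_def)
    thus "ennreal (g x) = ennreal (h x)" "inverse (ennreal (g x)) = inverse (ennreal (h x))"
      using gh by auto
  qed
  have eqH: "h_int g = h_int h"
    unfolding h_int_def
  proof (rule set_nn_cong)
    fix r :: real assume "r \<in> {0<..}"
    hence r: "0 < r" by simp
    have "kappa g r = kappa h r" unfolding kappa_def
      using r by (subst set_nn_cong[where g="\<lambda>s. ennreal (h s * exp (r - s))"]) (auto simp: gh)
    moreover have "kappa_d g r = kappa_d h r" unfolding kappa_d_def
      using r by (subst set_nn_cong[where g="\<lambda>s. inverse (ennreal (h s)) * ennreal (exp (r - s))"]) (auto simp: gh)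
    ultimately show "kappa g r + kappa_d g r - 2 = kappa h r + kappa_d h r - 2" by simp
  qed
  have fin: "A2l1 g < \<infinity>" using H eqA by simp
  show "h_int h \<le> ennreal (200 * enn2real (A2l1 h) * exp (200 * enn2real (A2l1 h)))"
  proof (cases "bI g 0 = \<infinity>")
    case True
    hence "h_int g = 0" by (intro main_deg gm g0 fin)
    thus ?thesis using eqH by simp
  next
    case False
    from main_nd[OF gm g0 fin False] show ?thesis using eqA eqH by simp
  qed
qed


end
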